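(* For $k\ge1$ and $g\in\mathbb C[x_1^{\pm1},\dots,x_k^{\pm1}]^{S(k)}$ put $\widetilde E_k(g)=q_3^{\frac{k-k^2}2}(q_1^{-1}-1)^k\frac{\prod_{1\le r\ne s\le k}(x_r-q_1^{-1}x_s)\,g(x_1,\dots,x_k)}{\prod_{1\le r\ne s\le k}(x_r-x_s)}$ and $\widetilde F_k(g)=(q_2/q_1)^{\frac{k-k^2}2}(1-q_1)^k\frac{\prod_{1\le r\ne s\le k}(x_r-q_1^{-1}x_s)\,g(x_1,\dots,x_k)}{\prod_{1\le r\ne s\le k}(x_r-x_s)}$. Then (a) $\Phi^>(\widetilde E_k(g))=\sum_{J\subset\{1,\dots,a\},|J|=k}\Big\{\prod_{r\in J}^{s\notin J}\frac{w_r-q_2^{-1}w_s}{w_r-w_s}\prod_{r\in J}Z(w_r)\cdot g(\{w_r\}_{r\in J})\prod_{r\in J}D_r^{-1}\Big\}$; (b) $\Phi^<(\widetilde F_k(g))=\sum_{J\subset\{1,\dots,a\},|J|=k}\Big\{\prod_{r\in J}^{s\notin J}\frac{w_r-q_2w_s}{w_r-w_s}\cdot g(\{q_1w_r\}_{r\in J})\prod_{r\in J}D_r\Big\}$.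
   Context: Fix $q_1,q_2,q_3\in\mathbb C^\times$, not roots of unity, with $q_1q_2q_3=1$, and square roots $q_1^{1/2},q_2^{1/2}$. Fix $a\ge1$, $N\ge0$, $(z_1,\dots,z_N)\in(\mathbb C^\times)^N$, $Z(z)=\prod_{k=1}^N(1-z_k/z)$. $\widetilde{\mathcal A}^{q_1}$ is the $\mathbb C$-algebra generated by $D_r^{\pm1},w_r^{\pm1}$ ($1\le r\le a$), all commuting except $D_rw_s=q_1^{\delta_{rs}}w_sD_r$, localized at $w_r-q_1^mw_s$ ($r\ne s$, $m\in\mathbb Z$). Let $Y_r(z)=\frac{-1}{1-q_1^{-1}}Z(z)\prod_{s\ne r}\frac{z-w_sq_2^{-1}}{z-w_s}$, $Y'_r(z)=\frac{1}{1-q_1}\prod_{s\ne r}\frac{zq_1^{-1}-w_sq_2}{zq_1^{-1}-w_s}$, $\zeta(z/w)=\frac{\prod_{i=1}^3(z-q_i^{-1}w)}{(z-w)^3}$, $\varphi(z/w)=\frac{(q_1^{1/2}z-q_1^{-1/2}w)(q_2^{1/2}z-q_2^{-1/2}w)}{(z-w)^2}$. $\mathbb S=\bigoplus_k\mathbb S_k$ with $\mathbb S_k$ the space of $f/\prod_{r\ne s}(x_r-x_s)$, $f$ a symmetric Laurent polynomial over $\mathbb C$ in $x_1,\dots,x_k$, with the shuffle product $F\star G=\frac{1}{k!\ell!}\mathrm{Sym}(F(x_1..x_k)G(x_{k+1}..x_{k+\ell})\prod_{r\le k<r'}\zeta(x_r/x_{r'}))$; $\mathbb S^{\mathrm{op}}$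 has opposite product. The maps $\Phi^>:\mathbb S\to\widetilde{\mathcal A}^{q_1}$, $\Phi^<:\mathbb S^{\mathrm{op}}\to\widetilde{\mathcal A}^{q_1}$ are defined on degree $k$ by $\Phi^>(E)=\sum_{m_1+\dots+m_a=k}\{\prod_{r}\prod_{p\le m_r}Y_r(w_rq_1^{-(p-1)})\cdot E(\{w_rq_1^{-(p-1)}\}_{r}^{p\le m_r})\prod_r\prod_{p_1<p_2\le m_r}\zeta^{-1}(\frac{w_rq_1^{-(p_1-1)}}{w_rq_1^{-(p_2-1)}})\prod_{r_1\ne r_2}\prod_{p_1\le m_{r_1},p_2\le m_{r_2}}\varphi^{-1}(\frac{w_{r_1}q_1^{-(p_1-1)}}{w_{r_2}q_1^{-(p_2-1)}})\prod_rD_r^{-m_r}\}$, $\Phi^<(F)=\sum_{m_1+\dots+m_a=k}\{\prod_{r}\prod_{p\le m_r}Y'_r(w_rq_1^{p})\cdot F(\{w_rq_1^{p}\}_{r}^{p\le m_r})\prod_r\prod_{p_1<p_2\le m_r}\zeta^{-1}(\frac{w_rq_1^{p_2}}{w_rq_1^{p_1}})\prod_{r_1\ne r_2}\prod_{p_1,p_2}\varphi^{-1}(\frac{w_{r_2}q_1^{p_2}}{w_{r_1}q_1^{p_1}})\prod_rD_r^{m_r}\}$, with $m_r\in\mathbb N$, $\zeta^{-1}=1/\zeta$, $\varphi^{-1}=1/\varphi$. *)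

theory Defs
  imports Complex_Main "HOL-Library.Multiset"
begin

text \<open>Indices r range over {1..a}; w :: nat => complex gives w_1..w_a.
 An element of the localized quantum torus A~^{q1} is represented in normal-ordered form
 sum_n f_n(w) D^n by its coefficient map  n :: nat => int  (exponent vector)  |->  f_n,
 where f_n is a function of the point w.\<close>

type_synonym atilde = "(nat \<Rightarrow> int) \<Rightarrow> (nat \<Rightarrow> complex) \<Rightarrow> complex"

definition not_root_of_unity :: "complex \<Rightarrow> bool" where
  "not_root_of_unity q \<longleftrightarrow> q \<noteq> 0 \<and> (\<forall>n::nat. n > 0 \<longrightarrow> q ^ n \<noteq> 1)"

definition zeta :: "complex \<Rightarrow> complex \<Rightarrow> complex \<Rightarrow> complex \<Rightarrow> complex" where
  "zeta q1 q2 q3 x = (x - inverse q1) * (x - inverse q2) * (x - inverse q3) / (x - 1) ^ 3"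

definition phi :: "complex \<Rightarrow> complex \<Rightarrow> complex \<Rightarrow> complex" where
  "phi s1 s2 x = (s1 * x - inverse s1) * (s2 * x - inverse s2) / (x - 1) ^ 2"

definition Zf :: "complex list \<Rightarrow> complex \<Rightarrow> complex" where
  "Zf zs z = (\<Prod>i<length zs. 1 - zs ! i / z)"

definition Yf :: "complex \<Rightarrow> complex \<Rightarrow> complex list \<Rightarrow> nat \<Rightarrow> (nat \<Rightarrow> complex) \<Rightarrow> nat \<Rightarrow> complex \<Rightarrow> complex" where
  "Yf q1 q2 zs a w r z = (-1 / (1 - inverse q1)) * Zf zs z *
     (\<Prod>s\<in>{1..a} - {r}. (z - w s * inverse q2) / (z - w s))"

definition Yp :: "complex \<Rightarrow> complex \<Rightarrow> nat \<Rightarrow> (nat \<Rightarrow> complex) \<Rightarrow> nat \<Rightarrow> complex \<Rightarrow> complex" where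
  "Yp q1 q2 a w r z = (1 / (1 - q1)) *
     (\<Prod>s\<in>{1..a} - {r}. (z * inverse q1 - w s * q2) / (z * inverse q1 - w s))"

definition compositions :: "nat \<Rightarrow> nat \<Rightarrow> (nat \<Rightarrow> nat) set" where
  "compositions a k = {m. (\<forall>r. r \<notin> {1..a} \<longrightarrow> m r = 0) \<and> (\<Sum>r\<in>{1..a}. m r) = k}"

definition xgt :: "complex \<Rightarrow> (nat \<Rightarrow> complex) \<Rightarrow> nat \<Rightarrow> nat \<Rightarrow> complex" where
  "xgt q1 w r p = w r * q1 powi (1 - int p)"

definition xlt :: "complex \<Rightarrow> (nat \<Rightarrow> complex) \<Rightarrow> nat \<Rightarrow> nat \<Rightarrow> complex" where
  "xlt q1 w r p = w r * q1 powi (int p)"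

definition pts :: "(nat \<Rightarrow> nat \<Rightarrow> complex) \<Rightarrow> nat \<Rightarrow> (nat \<Rightarrow> nat) \<Rightarrow> complex list" where
  "pts x a m = concat (map (\<lambda>r. map (\<lambda>p. x r p) [1..<Suc (m r)]) [1..<Suc a])"

definition Phi_gt :: "complex \<Rightarrow> complex \<Rightarrow> complex \<Rightarrow> complex \<Rightarrow> complex \<Rightarrow> complex list \<Rightarrow> nat \<Rightarrow> nat
    \<Rightarrow> (complex list \<Rightarrow> complex) \<Rightarrow> atilde" where
  "Phi_gt q1 q2 q3 s1 s2 zs a k E = (\<lambda>n w. \<Sum>m\<in>compositions a k.
     if n = (\<lambda>r. - int (m r)) then
       (\<Prod>r\<in>{1..a}. \<Prod>p\<in>{1..m r}. Yf q1 q2 zs a w r (xgt q1 w r p))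
       * E (pts (xgt q1 w) a m)
       * (\<Prod>r\<in>{1..a}. \<Prod>p1\<in>{1..m r}. \<Prod>p2\<in>{1..m r}.
            if p1 < p2 then inverse (zeta q1 q2 q3 (xgt q1 w r p1 / xgt q1 w r p2)) else 1)
       * (\<Prod>r1\<in>{1..a}. \<Prod>r2\<in>{1..a} - {r1}. \<Prod>p1\<in>{1..m r1}. \<Prod>p2\<in>{1..m r2}.
            inverse (phi s1 s2 (xgt q1 w r1 p1 / xgt q1 w r2 p2)))
     else 0)"

definition Phi_lt :: "complex \<Rightarrow> complex \<Rightarrow> complex \<Rightarrow> complex \<Rightarrow> complex \<Rightarrow> nat \<Rightarrow> nat
    \<Rightarrow> (complex list \<Rightarrow> complex) \<Rightarrow> atilde" where
  "Phi_lt q1 q2 q3 s1 s2 a k F = (\<lambda>n w. \<Sum>m\<in>compositions a k.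
     if n = (\<lambda>r. int (m r)) then
       (\<Prod>r\<in>{1..a}. \<Prod>p\<in>{1..m r}. Yp q1 q2 a w r (xlt q1 w r p))
       * F (pts (xlt q1 w) a m)
       * (\<Prod>r\<in>{1..a}. \<Prod>p1\<in>{1..m r}. \<Prod>p2\<in>{1..m r}.
            if p1 < p2 then inverse (zeta q1 q2 q3 (xlt q1 w r p2 / xlt q1 w r p1)) else 1)
       * (\<Prod>r1\<in>{1..a}. \<Prod>r2\<in>{1..a} - {r1}. \<Prod>p1\<in>{1..m r1}. \<Prod>p2\<in>{1..m r2}.
            inverse (phi s1 s2 (xlt q1 w r2 p2 / xlt q1 w r1 p1)))
     else 0)"

definition laurent_poly :: "nat \<Rightarrow> (complex list \<Rightarrow> complex) \<Rightarrow> bool" where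
  "laurent_poly k g \<longleftrightarrow> (\<exists>A c. finite A \<and> (\<forall>xs. length xs = k \<longrightarrow>
      g xs = (\<Sum>e\<in>A. c e * (\<Prod>i<k. (xs ! i) powi (e i)))))"

definition symmetric_fun :: "nat \<Rightarrow> (complex list \<Rightarrow> complex) \<Rightarrow> bool" where
  "symmetric_fun k g \<longleftrightarrow> (\<forall>xs ys. length xs = k \<longrightarrow> mset xs = mset ys \<longrightarrow> g xs = g ys)"

definition E_tilde :: "complex \<Rightarrow> complex \<Rightarrow> nat \<Rightarrow> (complex list \<Rightarrow> complex) \<Rightarrow> complex list \<Rightarrow> complex" where
  "E_tilde q1 q3 k g xs = q3 powi (- int (k * (k - 1) div 2)) * (inverse q1 - 1) ^ k
     * (\<Prod>r<k. \<Prod>s\<in>{..<k} - {r}. xs ! r - inverse q1 * xs ! s) * g xs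
     / (\<Prod>r<k. \<Prod>s\<in>{..<k} - {r}. xs ! r - xs ! s)"

definition F_tilde :: "complex \<Rightarrow> complex \<Rightarrow> nat \<Rightarrow> (complex list \<Rightarrow> complex) \<Rightarrow> complex list \<Rightarrow> complex" where
  "F_tilde q1 q2 k g xs = (q2 / q1) powi (- int (k * (k - 1) div 2)) * (1 - q1) ^ k
     * (\<Prod>r<k. \<Prod>s\<in>{..<k} - {r}. xs ! r - inverse q1 * xs ! s) * g xs
     / (\<Prod>r<k. \<Prod>s\<in>{..<k} - {r}. xs ! r - xs ! s)"

definition RHS_a :: "complex \<Rightarrow> complex list \<Rightarrow> nat \<Rightarrow> nat \<Rightarrow> (complex list \<Rightarrow> complex) \<Rightarrow> atilde" where
  "RHS_a q2 zs a k g = (\<lambda>n w. \<Sum>J\<in>{J. J \<subseteq> {1..a} \<and> card J = k}.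
     if n = (\<lambda>r. if r \<in> J then -1 else 0) then
       (\<Prod>r\<in>J. \<Prod>s\<in>{1..a} - J. (w r - inverse q2 * w s) / (w r - w s))
       * (\<Prod>r\<in>J. Zf zs (w r)) * g (map w (sorted_list_of_set J))
     else 0)"

definition RHS_b :: "complex \<Rightarrow> complex \<Rightarrow> nat \<Rightarrow> nat \<Rightarrow> (complex list \<Rightarrow> complex) \<Rightarrow> atilde" where
  "RHS_b q1 q2 a k g = (\<lambda>n w. \<Sum>J\<in>{J. J \<subseteq> {1..a} \<and> card J = k}.
     if n = (\<lambda>r. if r \<in> J then 1 else 0) then
       (\<Prod>r\<in>J. \<Prod>s\<in>{1..a} - J. (w r - q2 * w s) / (w r - w s))
       * g (map (\<lambda>r. q1 * w r) (sorted_list_of_set J))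
     else 0)"

text \<open>Generic points w: all w_r nonzero and no ratio w_r/w_s (r \<noteq> s) lies in the
 group generated by q1, q2 (this inverts all w_r - q1^m w_s and every other denominator).\<close>
definition generic_w :: "complex \<Rightarrow> complex \<Rightarrow> nat \<Rightarrow> (nat \<Rightarrow> complex) \<Rightarrow> bool" where
  "generic_w q1 q2 a w \<longleftrightarrow> (\<forall>r\<in>{1..a}. w r \<noteq> 0) \<and>
     (\<forall>r\<in>{1..a}. \<forall>s\<in>{1..a}. r \<noteq> s \<longrightarrow> (\<forall>i j::int. w r \<noteq> q1 powi i * q2 powi j * w s))"

end

theory Submission
  imports Defs
begin


definition mJ :: "nat set \<Rightarrow> nat \<Rightarrow> nat" where
  "mJ J = (\<lambda>r. if r \<in> J then 1 else 0)"

lemma concat_mJ: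
  "concat (map (\<lambda>r. map (\<lambda>p. x r p) [1..<Suc (mJ J r)]) xs) = map (\<lambda>r. x r 1) (filter (\<lambda>r. r \<in> J) xs)"
  by (induction xs) (auto simp: mJ_def)

lemma sorted_J:
  assumes "J \<subseteq> {1..a}"
  shows "sorted_list_of_set J = filter (\<lambda>r. r \<in> J) [1..<Suc a]"
proof -
  define F where "F = filter (\<lambda>r. r \<in> J) [1..<Suc a]"
  have "set F = J" using assms unfolding F_def by (auto simp del: upt_Suc)
  moreover have "sorted_list_of_set (set F) = F"
    by (subst sorted_list_of_set_sort_remdups) (simp del: upt_Suc add: F_def sorted_wrt_filter distinct_remdups_id sorted_sort_id)
  ultimately show ?thesis unfolding F_def by metis
qed

lemma pts_mJ:
  assumes "J \<subseteq> {1..a}"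
  shows "pts x a (mJ J) = map (\<lambda>r. x r 1) (sorted_list_of_set J)"
  unfolding pts_def concat_mJ sorted_J[OF assms] ..

lemma length_pts: "length (pts x a m) = (\<Sum>r\<in>{1..a}. m r)"
  by (simp del: upt_Suc add: pts_def length_concat comp_def sum_set_upt_conv_sum_list_nat[symmetric] atLeastLessThanSuc_atLeastAtMost)

lemma mem_pts: "r \<in> {1..a} \<Longrightarrow> p \<in> {1..m r} \<Longrightarrow> x r p \<in> set (pts x a m)"
  unfolding pts_def set_concat by (auto simp del: upt_Suc intro!: bexI[of _ r])

lemma num_zero:
  fixes xs :: "complex list"
  assumes "u \<in> set xs" "v \<in> set xs" "u \<noteq> v" "u = c * v"
  shows "(\<Prod>r<length xs. \<Prod>s\<in>{..<length xs} - {r}. xs ! r - c * xs ! s) = 0"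
proof -
  obtain i where i: "i < length xs" "xs ! i = u" using assms(1) by (auto simp: in_set_conv_nth)
  obtain j where j: "j < length xs" "xs ! j = v" using assms(2) by (auto simp: in_set_conv_nth)
  have "i \<noteq> j" using i j assms(3) by auto
  show ?thesis
  proof (rule prod_zero)
    show "\<exists>r\<in>{..<length xs}. (\<Prod>s\<in>{..<length xs} - {r}. xs ! r - c * xs ! s) = 0"
    proof (rule bexI[of _ i])
      show "(\<Prod>s\<in>{..<length xs} - {i}. xs ! i - c * xs ! s) = 0"
        by (rule prod_zero) (use i j assms \<open>i\<noteq>j\<close> in auto)
    qed (use i in auto)
  qed simp
qed

lemma reindex_pairs:
  assumes "finite J"
  shows "(\<Prod>i<card J. \<Prod>j\<in>{..<card J} - {i}. f (map v (sorted_list_of_set J) ! i) (map v (sorted_list_of_set J) ! j))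
       = (\<Prod>r\<in>J. \<Prod>s\<in>J - {r}. f (v r) (v s))"
proof -
  let ?L = "sorted_list_of_set J"
  have len: "length ?L = card J" by simp
  have inj: "inj_on (nth ?L) {..<card J}"
    using distinct_sorted_list_of_set[of J] len by (simp add: inj_on_nth)
  have img: "nth ?L ` {..<card J} = J"
  proof -
    have "nth ?L ` {..<length ?L} = set ?L" by (auto simp: in_set_conv_nth)
    then show ?thesis using assms len by simp
  qed
  have inner: "(\<Prod>j\<in>{..<card J} - {i}. f (v (?L ! i)) (v (?L ! j))) = (\<Prod>s\<in>J - {?L ! i}. f (v (?L ! i)) (v s))"
    if "i < card J" for i
  proof -
    have "nth ?L ` ({..<card J} - {i}) = J - {?L ! i}"
      using inj_on_image_set_diff[OF inj, of "{..<card J}" "{i}"] img that by auto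
    moreover have "inj_on (nth ?L) ({..<card J} - {i})" using inj by (rule inj_on_subset) auto
    ultimately show ?thesis using prod.reindex[of "nth ?L" "{..<card J} - {i}" "\<lambda>s. f (v (?L ! i)) (v s)"] by simp
  qed
  have "(\<Prod>i<card J. \<Prod>j\<in>{..<card J} - {i}. f (map v ?L ! i) (map v ?L ! j))
      = (\<Prod>i<card J. \<Prod>s\<in>J - {?L ! i}. f (v (?L ! i)) (v s))"
    using inner len by (intro prod.cong) auto
  also have "\<dots> = (\<Prod>r\<in>J. \<Prod>s\<in>J - {r}. f (v r) (v s))"
    using prod.reindex[OF inj, of "\<lambda>r. \<Prod>s\<in>J - {r}. f (v r) (v s)"] img by simp
  finally show ?thesis .
qed

lemma pair_prod:
  fixes h :: "nat \<Rightarrow> nat \<Rightarrow> complex"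
  assumes "finite J" "\<And>r s. r \<in> J \<Longrightarrow> s \<in> J \<Longrightarrow> r \<noteq> s \<Longrightarrow> h r s * h s r = c"
  shows "(\<Prod>r\<in>J. \<Prod>s\<in>J - {r}. h r s) = c ^ (card J * (card J - 1) div 2)"
  using assms
proof (induction J rule: finite_induct)
  case empty
  then show ?case by simp
next
  case (insert x F)
  have IH: "(\<Prod>r\<in>F. \<Prod>s\<in>F - {r}. h r s) = c ^ (card F * (card F - 1) div 2)"
    using insert by auto
  have "(\<Prod>r\<in>insert x F. \<Prod>s\<in>insert x F - {r}. h r s)
      = (\<Prod>s\<in>F. h x s) * (\<Prod>r\<in>F. \<Prod>s\<in>insert x F - {r}. h r s)"
    using insert by (simp add: insert_Diff_if)
  also have "(\<Prod>r\<in>F. \<Prod>s\<in>insert x F - {r}. h r s) = (\<Prod>r\<in>F. h r x * (\<Prod>s\<in>F - {r}. h r s))"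
  proof (rule prod.cong)
    fix r assume "r \<in> F"
    then have "insert x F - {r} = insert x (F - {r})" using insert by auto
    then show "(\<Prod>s\<in>insert x F - {r}. h r s) = h r x * (\<Prod>s\<in>F - {r}. h r s)"
      using insert by simp
  qed simp
  also have "\<dots> = (\<Prod>r\<in>F. h r x) * (\<Prod>r\<in>F. \<Prod>s\<in>F - {r}. h r s)" by (simp add: prod.distrib)
  finally have "(\<Prod>r\<in>insert x F. \<Prod>s\<in>insert x F - {r}. h r s)
     = (\<Prod>s\<in>F. h x s * h s x) * (\<Prod>r\<in>F. \<Prod>s\<in>F - {r}. h r s)"
    by (simp add: prod.distrib mult_ac)
  also have "(\<Prod>s\<in>F. h x s * h s x) = (\<Prod>s\<in>F. c)"
    using insert by (intro prod.cong) auto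
  also have "\<dots> = c ^ card F" by simp
  finally have eq: "(\<Prod>r\<in>insert x F. \<Prod>s\<in>insert x F - {r}. h r s) = c ^ (card F + card F * (card F - 1) div 2)"
    using IH by (simp add: power_add)
  have "card F + card F * (card F - 1) div 2 = Suc (card F) * (Suc (card F) - 1) div 2"
    by (cases "card F") auto
  then show ?case using eq insert by simp
qed

lemma finite_comp: "finite (compositions a k)"
proof (rule finite_subset)
  show "compositions a k \<subseteq> {f. \<forall>x. (x \<in> {1..a} \<longrightarrow> f x \<in> {0..k}) \<and> (x \<notin> {1..a} \<longrightarrow> f x = 0)}"
  proof safe
    fix m x assume m: "m \<in> compositions a k" and x: "x \<in> {1..a}"
    have "m x \<le> (\<Sum>r\<in>{1..a}. m r)" by (rule member_le_sum) (use x in auto)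
    then show "m x \<in> {0..k}" using m by (simp add: compositions_def)
  next
    fix m x assume "m \<in> compositions a k" "x \<notin> {1..a}"
    then show "m x = 0" by (simp add: compositions_def)
  qed
qed (rule finite_set_of_finite_funs; simp)

lemma sum_mJ: "J \<subseteq> {1..a} \<Longrightarrow> (\<Sum>r\<in>{1..a}. mJ J r) = card J"
  unfolding mJ_def by (simp add: sum.If_cases Int_absorb1)

lemma mJ_inv: "\<forall>r. (m::nat\<Rightarrow>nat) r \<le> 1 \<Longrightarrow> (\<lambda>r. if r \<in> {r. m r = 1} then 1 else 0) = m"
proof
  fix r assume "\<forall>r. m r \<le> 1"
  then have "m r \<le> 1" by blast
  then have "m r = 0 \<or> m r = 1" by presburger
  then show "(if r \<in> {r. m r = 1} then 1 else 0) = m r" by auto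
qed

lemma sum_comp_reduce:
  fixes T :: "(nat \<Rightarrow> nat) \<Rightarrow> complex"
  assumes "\<And>m r. m \<in> compositions a k \<Longrightarrow> m r \<ge> 2 \<Longrightarrow> T m = 0"
  shows "(\<Sum>m\<in>compositions a k. T m) = (\<Sum>J\<in>{J. J \<subseteq> {1..a} \<and> card J = k}. T (mJ J))"
proof -
  let ?C = "compositions a k \<inter> {m. \<forall>r. m r \<le> 1}"
  have "(\<Sum>m\<in>compositions a k. T m) = (\<Sum>m\<in>?C. T m)"
  proof (rule sum.mono_neutral_right[OF finite_comp])
    show "\<forall>m\<in>compositions a k - ?C. T m = 0"
    proof
      fix m assume "m \<in> compositions a k - ?C"
      then have m: "m \<in> compositions a k" and "\<exists>r. \<not> m r \<le> 1" by auto
      then obtain r where "\<not> m r \<le> 1" by blast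
      then have "m r \<ge> 2" by simp
      then show "T m = 0" using m assms by blast
    qed
  qed auto
  also have "\<dots> = (\<Sum>J\<in>{J. J \<subseteq> {1..a} \<and> card J = k}. T (mJ J))"
  proof (rule sum.reindex_bij_betw[symmetric])
    show "bij_betw mJ {J. J \<subseteq> {1..a} \<and> card J = k} ?C"
    proof (rule bij_betw_byWitness[where f' = "\<lambda>m. {r. m r = 1}"])
      show "\<forall>J\<in>{J. J \<subseteq> {1..a} \<and> card J = k}. {r. mJ J r = 1} = J"
        by (auto simp: mJ_def)
      show "\<forall>m\<in>?C. mJ {r. m r = 1} = m"
      proof
        fix m assume "m \<in> ?C"
        then have "\<forall>r. m r \<le> 1" by auto
        then show "mJ {r. m r = 1} = m" unfolding mJ_def
          by (rule mJ_inv)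
      qed
      show "mJ ` {J. J \<subseteq> {1..a} \<and> card J = k} \<subseteq> ?C"
      proof
        fix m assume "m \<in> mJ ` {J. J \<subseteq> {1..a} \<and> card J = k}"
        then obtain J where J: "J \<subseteq> {1..a}" "card J = k" "m = mJ J" by auto
        show "m \<in> ?C" using J sum_mJ[OF J(1)] by (auto simp: mJ_def compositions_def)
      qed
      show "(\<lambda>m. {r. m r = 1}) ` ?C \<subseteq> {J. J \<subseteq> {1..a} \<and> card J = k}"
      proof safe
        fix m assume m: "m \<in> compositions a k" "\<forall>r. m r \<le> 1"
        then show "x \<in> {1..a}" if "m x = 1" for x using that by (auto simp: compositions_def)
        have "mJ {r. m r = 1} = m" unfolding mJ_def using m(2)
          by (intro mJ_inv)
        moreover have "{r. m r = 1} \<subseteq> {1..a}" using m by (auto simp: compositions_def)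
        ultimately show "card {r. m r = 1} = k" using sum_mJ[of "{r. m r = 1}" a] m(1)
          by (simp add: compositions_def)
      qed
    qed
  qed
  finally show ?thesis .
qed



lemma phi_eq:
  fixes s1 s2 u v :: complex
  assumes "s1 \<noteq> 0" "s2 \<noteq> 0" "v \<noteq> 0" "u \<noteq> v" "s1^2 * u \<noteq> v" "s2^2 * u \<noteq> v"
  shows "inverse (phi s1 s2 (u / v)) = s1 * s2 * (u - v)^2 / ((s1^2 * u - v) * (s2^2 * u - v))"
proof -
  have a: "s1 * (u / v) - inverse s1 = (s1^2 * u - v) / (s1 * v)"
    using assms by (simp add: field_simps power2_eq_square)
  have b: "s2 * (u / v) - inverse s2 = (s2^2 * u - v) / (s2 * v)"
    using assms by (simp add: field_simps power2_eq_square)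
  have c: "u / v - 1 = (u - v) / v" using assms by (simp add: field_simps)
  have nz: "u - v \<noteq> 0" "s1^2 * u - v \<noteq> 0" "s2^2 * u - v \<noteq> 0" using assms by auto
  have gen: "inverse ((X / (s1 * v)) * (Y / (s2 * v)) / (D / v)^2) = s1 * s2 * D^2 / (X * Y)"
    if "X \<noteq> 0" "Y \<noteq> 0" "D \<noteq> 0" for X Y D
    using that assms by (simp add: field_simps power2_eq_square)
  show ?thesis unfolding phi_def a b c by (rule gen) (use nz in auto)
qed

lemma phi_eq':
  fixes s1 s2 u v q1 q2 :: complex
  assumes "s1^2 = q1" "s2^2 = q2" "q1 \<noteq> 0" "q2 \<noteq> 0" "v \<noteq> 0" "u \<noteq> v" "q1 * u \<noteq> v" "q2 * u \<noteq> v"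
  shows "inverse (phi s1 s2 (u / v)) = s1 * s2 * (u - v)^2 / ((q1 * u - v) * (q2 * u - v))"
  using phi_eq[of s1 s2 v u] assms by auto

lemma ordA:
  fixes u v q1 q2 s1 s2 :: complex
  assumes nz: "u \<noteq> 0" "v \<noteq> 0" "q1 \<noteq> 0" "q2 \<noteq> 0" "s1^2 = q1" "s2^2 = q2"
    and d: "u \<noteq> v" "q1 * u \<noteq> v" "q2 * u \<noteq> v"
  shows "(u - v * inverse q2) / (u - v) * ((u - inverse q1 * v) / (u - v)) * inverse (phi s1 s2 (u / v))
       = s1 * s2 / (q1 * q2)"
proof -
  have e1: "u - v * inverse q2 = (q2 * u - v) / q2" using nz by (simp add: field_simps)
  have e2: "u - inverse q1 * v = (q1 * u - v) / q1" using nz by (simp add: field_simps)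
  have gen: "(Y / q2) / D * ((X / q1) / D) * (s1 * s2 * D^2 / (X * Y)) = s1 * s2 / (q1 * q2)"
    if "X \<noteq> 0" "Y \<noteq> 0" "D \<noteq> 0" for X Y D
    using that nz by (simp add: field_simps power2_eq_square)
  show ?thesis unfolding e1 e2 phi_eq'[OF nz(5,6,3,4,2) d] by (rule gen) (use d in auto)
qed

lemma pairA:
  fixes u v q1 q2 s1 s2 :: complex
  assumes nz: "u \<noteq> 0" "v \<noteq> 0" "q1 \<noteq> 0" "q2 \<noteq> 0" "s1^2 = q1" "s2^2 = q2"
    and d: "u \<noteq> v" "q1 * u \<noteq> v" "q1 * v \<noteq> u" "q2 * u \<noteq> v" "q2 * v \<noteq> u"
  shows "((u - v * inverse q2) / (u - v) * ((u - inverse q1 * v) / (u - v)) * inverse (phi s1 s2 (u / v)))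
       * ((v - u * inverse q2) / (v - u) * ((v - inverse q1 * u) / (v - u)) * inverse (phi s1 s2 (v / u)))
       = inverse (q1 * q2)"
proof -
  have "(s1 * s2)^2 = q1 * q2" using nz by (simp add: power_mult_distrib)
  then have "s1 * s2 / (q1 * q2) * (s1 * s2 / (q1 * q2)) = inverse (q1 * q2)"
    using nz by (simp add: field_simps power2_eq_square)
  then show ?thesis
    using ordA[OF nz d(1,2,4)] ordA[OF nz(2,1,3,4,5,6) d(1)[symmetric] d(3,5)] by simp
qed

lemma ordB:
  fixes u v q1 q2 s1 s2 :: complex
  assumes nz: "u \<noteq> 0" "v \<noteq> 0" "q1 \<noteq> 0" "q2 \<noteq> 0" "s1^2 = q1" "s2^2 = q2"
    and d: "u \<noteq> v" "q1 * u \<noteq> v" "q1 * v \<noteq> u" "q2 * v \<noteq> u"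
  shows "(q1 * u * inverse q1 - v * q2) / (q1 * u * inverse q1 - v) * ((q1 * u - inverse q1 * (q1 * v)) / (q1 * u - q1 * v)) * inverse (phi s1 s2 (q1 * v / (q1 * u)))
       = - s1 * s2 * (q1 * u - v) / (q1 * (q1 * v - u))"
proof -
  have e0: "q1 * u * inverse q1 = u" "q1 * v / (q1 * u) = v / u" using nz by auto
  have e1: "u - v * q2 = - (q2 * v - u)" by simp
  have e2: "q1 * u - inverse q1 * (q1 * v) = q1 * u - v" using nz by simp
  have e3: "q1 * u - q1 * v = q1 * (u - v)" by (simp add: algebra_simps)
  have e4: "(v - u)^2 = (u - v)^2" by (simp add: power2_eq_square algebra_simps)
  have gen: "(- Y) / D * (X1 / (q1 * D)) * (s1 * s2 * D^2 / (X2 * Y)) = - s1 * s2 * X1 / (q1 * X2)"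
    if "X2 \<noteq> 0" "Y \<noteq> 0" "D \<noteq> 0" for X1 X2 Y D
    using that nz by (simp add: field_simps power2_eq_square)
  show ?thesis unfolding e0 e1 e2 e3 phi_eq'[OF nz(5,6,3,4,1) d(1)[symmetric] d(3,4)] e4
    by (rule gen) (use d in auto)
qed

lemma pairB:
  fixes u v q1 q2 s1 s2 :: complex
  assumes nz: "u \<noteq> 0" "v \<noteq> 0" "q1 \<noteq> 0" "q2 \<noteq> 0" "s1^2 = q1" "s2^2 = q2"
    and d: "u \<noteq> v" "q1 * u \<noteq> v" "q1 * v \<noteq> u" "q2 * u \<noteq> v" "q2 * v \<noteq> u"
  shows "((q1 * u * inverse q1 - v * q2) / (q1 * u * inverse q1 - v) * ((q1 * u - inverse q1 * (q1 * v)) / (q1 * u - q1 * v)) * inverse (phi s1 s2 (q1 * v / (q1 * u))))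
       * ((q1 * v * inverse q1 - u * q2) / (q1 * v * inverse q1 - u) * ((q1 * v - inverse q1 * (q1 * u)) / (q1 * v - q1 * u)) * inverse (phi s1 s2 (q1 * u / (q1 * v))))
       = q2 / q1"
proof -
  have "(s1 * s2)^2 = q1 * q2" using nz by (simp add: power_mult_distrib)
  moreover have "q1 * u - v \<noteq> 0" "q1 * v - u \<noteq> 0" using d by auto
  moreover have gen: "(- s1 * s2 * X1 / (q1 * X2)) * (- s1 * s2 * X2 / (q1 * X1)) = (s1 * s2)^2 / q1^2"
    if "X1 \<noteq> 0" "X2 \<noteq> 0" for X1 X2 using that nz by (simp add: field_simps power2_eq_square)
  moreover have "q1 * q2 / q1^2 = q2 / q1" using nz by (simp add: power2_eq_square)
  ultimately have "(- s1 * s2 * (q1 * u - v) / (q1 * (q1 * v - u))) * (- s1 * s2 * (q1 * v - u) / (q1 * (q1 * u - v))) = q2 / q1"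
    by metis
  then show ?thesis
    using ordB[OF nz d(1,2,3,5)] ordB[OF nz(2,1,3,4,5,6) d(1)[symmetric] d(3,2,4)] by simp
qed



lemma prod_mJ1: "(\<Prod>p\<in>{1..mJ J r}. (F p :: complex)) = (if r \<in> J then F 1 else 1)"
  by (cases "r \<in> J") (simp_all add: mJ_def)

lemma prod_mJ1': "(\<Prod>p\<in>{Suc 0..mJ J r}. (F p :: complex)) = (if r \<in> J then F 1 else 1)"
  by (cases "r \<in> J") (simp_all add: mJ_def)

lemma prod_mJ:
  fixes f :: "nat \<Rightarrow> nat \<Rightarrow> complex"
  assumes "finite A" "J \<subseteq> A"
  shows "(\<Prod>r\<in>A. \<Prod>p\<in>{1..mJ J r}. f r p) = (\<Prod>r\<in>J. f r 1)"
proof -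
  have "(\<Prod>r\<in>A. \<Prod>p\<in>{1..mJ J r}. f r p) = (\<Prod>r\<in>A. if r \<in> J then f r 1 else 1)"
    by (rule prod.cong) (auto simp: mJ_def)
  also have "\<dots> = (\<Prod>r\<in>A \<inter> J. f r 1)" by (rule prod.inter_restrict[symmetric]) (rule assms)
  also have "A \<inter> J = J" using assms by auto
  finally show ?thesis .
qed

lemma prod_J:
  fixes f :: "nat \<Rightarrow> complex"
  assumes "finite A" "J \<subseteq> A"
  shows "(\<Prod>r\<in>A. if r \<in> J then f r else 1) = (\<Prod>r\<in>J. f r)"
proof -
  have "(\<Prod>r\<in>A. if r \<in> J then f r else 1) = (\<Prod>r\<in>A \<inter> J. f r)" by (rule prod.inter_restrict[symmetric]) (rule assms)
  also have "A \<inter> J = J" using assms by auto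
  finally show ?thesis .
qed

lemma phi_prod_mJ:
  fixes f :: "nat \<Rightarrow> nat \<Rightarrow> nat \<Rightarrow> nat \<Rightarrow> complex"
  assumes "J \<subseteq> {1..a}"
  shows "(\<Prod>r1\<in>{1..a}. \<Prod>r2\<in>{1..a} - {r1}. \<Prod>p1\<in>{1..mJ J r1}. \<Prod>p2\<in>{1..mJ J r2}. f r1 r2 p1 p2)
       = (\<Prod>r1\<in>J. \<Prod>r2\<in>J - {r1}. f r1 r2 1 1)"
proof -
  have "(\<Prod>r1\<in>{1..a}. \<Prod>r2\<in>{1..a} - {r1}. \<Prod>p1\<in>{1..mJ J r1}. \<Prod>p2\<in>{1..mJ J r2}. f r1 r2 p1 p2)
      = (\<Prod>r1\<in>{1..a}. if r1 \<in> J then (\<Prod>r2\<in>{1..a} - {r1}. if r2 \<in> J then f r1 r2 1 1 else 1) else 1)"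
    by (rule prod.cong) (simp_all add: prod_mJ1 prod_mJ1' cong: prod.cong)
  also have "\<dots> = (\<Prod>r1\<in>{1..a}. if r1 \<in> J then (\<Prod>r2\<in>J - {r1}. f r1 r2 1 1) else 1)"
  proof (rule prod.cong)
    fix r1 assume "r1 \<in> {1..a}"
    have "(\<Prod>r2\<in>{1..a} - {r1}. if r2 \<in> J then f r1 r2 1 1 else 1) = (\<Prod>r2\<in>({1..a} - {r1}) \<inter> J. f r1 r2 1 1)"
      by (rule prod.inter_restrict[symmetric]) simp
    also have "({1..a} - {r1}) \<inter> J = J - {r1}" using assms by auto
    finally show "(if r1 \<in> J then (\<Prod>r2\<in>{1..a} - {r1}. if r2 \<in> J then f r1 r2 1 1 else 1) else 1) =
          (if r1 \<in> J then (\<Prod>r2\<in>J - {r1}. f r1 r2 1 1) else 1)" by simp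
  qed simp
  also have "\<dots> = (\<Prod>r1\<in>J. \<Prod>r2\<in>J - {r1}. f r1 r2 1 1)"
    by (rule prod_J) (use assms in auto)
  finally show ?thesis .
qed

lemma zeta_prod_mJ:
  "(\<Prod>r\<in>A. \<Prod>p1\<in>{1..mJ J r}. \<Prod>p2\<in>{1..mJ J r}. if p1 < p2 then (f r p1 p2 :: complex) else 1) = 1"
proof (rule prod.neutral, rule ballI)
  fix r assume "r \<in> A"
  show "(\<Prod>p1\<in>{1..mJ J r}. \<Prod>p2\<in>{1..mJ J r}. if p1 < p2 then f r p1 p2 else 1) = 1"
  proof -
    have "mJ J r = 0 \<or> mJ J r = 1" by (simp add: mJ_def)
    then show ?thesis
    proof
      assume h: "mJ J r = 0" show ?thesis unfolding h by simp
    next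
      assume h: "mJ J r = 1" show ?thesis unfolding h by simp
    qed
  qed
qed

lemma genw:
  assumes "generic_w q1 q2 a w" "r \<in> {1..a}" "s \<in> {1..a}" "r \<noteq> s"
  shows "w r \<noteq> w s" "q1 * w r \<noteq> w s" "q2 * w r \<noteq> w s" "w r \<noteq> 0"
proof -
  have H: "\<forall>r\<in>{1..a}. \<forall>s\<in>{1..a}. r \<noteq> s \<longrightarrow> (\<forall>i j::int. w r \<noteq> q1 powi i * q2 powi j * w s)"
    using assms(1) unfolding generic_w_def by (rule conjunct2)
  have g: "w s \<noteq> q1 powi i * q2 powi j * w r" for i j
    using H assms(2,3,4) by simp
  show "w r \<noteq> w s" using g[of 0 0] by auto
  show "q1 * w r \<noteq> w s" using g[of 1 0] by (auto simp: mult.commute)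
  show "q2 * w r \<noteq> w s" using g[of 0 1] by (auto simp: mult.commute)
  have H0: "\<forall>r\<in>{1..a}. w r \<noteq> 0"
    using assms(1) unfolding generic_w_def by (rule conjunct1)
  show "w r \<noteq> 0" using H0 assms(2) by simp
qed



lemma termA:
  fixes q1 q2 q3 s1 s2 :: complex and w :: "nat \<Rightarrow> complex"
  assumes q: "q1 \<noteq> 0" "q2 \<noteq> 0" "q1 \<noteq> 1" "s1^2 = q1" "s2^2 = q2" "q3 = inverse (q1*q2)"
    and gw: "generic_w q1 q2 a w" and J: "J \<subseteq> {1..a}" "card J = k"
  shows "(\<Prod>r\<in>{1..a}. \<Prod>p\<in>{1..mJ J r}. Yf q1 q2 zs a w r (xgt q1 w r p))
       * E_tilde q1 q3 k g (pts (xgt q1 w) a (mJ J))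
       * (\<Prod>r\<in>{1..a}. \<Prod>p1\<in>{1..mJ J r}. \<Prod>p2\<in>{1..mJ J r}.
            if p1 < p2 then inverse (zeta q1 q2 q3 (xgt q1 w r p1 / xgt q1 w r p2)) else 1)
       * (\<Prod>r1\<in>{1..a}. \<Prod>r2\<in>{1..a} - {r1}. \<Prod>p1\<in>{1..mJ J r1}. \<Prod>p2\<in>{1..mJ J r2}.
            inverse (phi s1 s2 (xgt q1 w r1 p1 / xgt q1 w r2 p2)))
     = (\<Prod>r\<in>J. \<Prod>s\<in>{1..a} - J. (w r - inverse q2 * w s) / (w r - w s))
       * (\<Prod>r\<in>J. Zf zs (w r)) * g (map w (sorted_list_of_set J))"
proof -
  have fin: "finite J" using J finite_subset by blast
  have x1: "xgt q1 w r 1 = w r" "xgt q1 w r (Suc 0) = w r" for r by (simp_all add: xgt_def)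
  define A where "A r s = (w r - w s * inverse q2) / (w r - w s)" for r s
  define B where "B r s = w r - inverse q1 * w s" for r s
  define C where "C r s = w r - w s" for r s
  define P where "P r s = inverse (phi s1 s2 (w r / w s))" for r s
  define c0 where "c0 = -1 / (1 - inverse q1)"
  define N where "N = k * (k - 1) div 2"
  define L where "L = sorted_list_of_set J"
  define Z where "Z = (\<Prod>r\<in>J. Zf zs (w r))"
  define Q where "Q = (\<Prod>r\<in>J. \<Prod>s\<in>{1..a} - J. A r s)"
  define PA where "PA = (\<Prod>r\<in>J. \<Prod>s\<in>J - {r}. A r s)"
  define PB where "PB = (\<Prod>r\<in>J. \<Prod>s\<in>J - {r}. B r s)"
  define PC where "PC = (\<Prod>r\<in>J. \<Prod>s\<in>J - {r}. C r s)"
  define PP where "PP = (\<Prod>r\<in>J. \<Prod>s\<in>J - {r}. P r s)"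
  have Y1: "Yf q1 q2 zs a w r (w r) = c0 * Zf zs (w r) * ((\<Prod>s\<in>J - {r}. A r s) * (\<Prod>s\<in>{1..a} - J. A r s))"
    if "r \<in> J" for r
  proof -
    have "{1..a} - {r} = (J - {r}) \<union> ({1..a} - J)" using J that by auto
    then have "(\<Prod>s\<in>{1..a} - {r}. A r s) = (\<Prod>s\<in>(J - {r}) \<union> ({1..a} - J). A r s)" by simp
    also have "\<dots> = (\<Prod>s\<in>J - {r}. A r s) * (\<Prod>s\<in>{1..a} - J. A r s)"
      by (rule prod.union_disjoint) (use fin in auto)
    finally have "(\<Prod>s\<in>{1..a} - {r}. A r s) = (\<Prod>s\<in>J - {r}. A r s) * (\<Prod>s\<in>{1..a} - J. A r s)" .
    then show ?thesis unfolding Yf_def c0_def A_def by simp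
  qed
  have Yp: "(\<Prod>r\<in>{1..a}. \<Prod>p\<in>{1..mJ J r}. Yf q1 q2 zs a w r (xgt q1 w r p)) = (\<Prod>r\<in>J. Yf q1 q2 zs a w r (w r))"
    using prod_mJ[OF finite_atLeastAtMost J(1), of "\<lambda>r p. Yf q1 q2 zs a w r (xgt q1 w r p)"] by (simp add: x1)
  also have "\<dots> = (\<Prod>r\<in>J. c0 * Zf zs (w r) * ((\<Prod>s\<in>J - {r}. A r s) * (\<Prod>s\<in>{1..a} - J. A r s)))"
    by (rule prod.cong) (simp_all add: Y1)
  also have "\<dots> = c0 ^ k * Z * (PA * Q)"
    unfolding Z_def PA_def Q_def using J by (simp add: prod.distrib)
  finally have Yp: "(\<Prod>r\<in>{1..a}. \<Prod>p\<in>{1..mJ J r}. Yf q1 q2 zs a w r (xgt q1 w r p)) = c0 ^ k * Z * (PA * Q)" .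
  have Ph: "(\<Prod>r1\<in>{1..a}. \<Prod>r2\<in>{1..a} - {r1}. \<Prod>p1\<in>{1..mJ J r1}. \<Prod>p2\<in>{1..mJ J r2}.
            inverse (phi s1 s2 (xgt q1 w r1 p1 / xgt q1 w r2 p2))) = PP"
    using phi_prod_mJ[OF J(1), of "\<lambda>r1 r2 p1 p2. inverse (phi s1 s2 (xgt q1 w r1 p1 / xgt q1 w r2 p2))"]
    by (simp add: x1 P_def PP_def)
  have pts: "pts (xgt q1 w) a (mJ J) = map w L" using pts_mJ[OF J(1), of "xgt q1 w"] by (simp add: x1 L_def)
  have E: "E_tilde q1 q3 k g (pts (xgt q1 w) a (mJ J)) = q3 powi (- int N) * (inverse q1 - 1)^k * PB * g (map w L) / PC"
    unfolding pts E_tilde_def N_def PB_def PC_def B_def C_def L_def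
    using reindex_pairs[OF fin, of "\<lambda>u v. u - inverse q1 * v" w] reindex_pairs[OF fin, of "\<lambda>u v. u - v" w] J(2)
    by simp
  have H: "(\<Prod>r\<in>J. \<Prod>s\<in>J - {r}. A r s * (B r s / C r s) * P r s) = inverse (q1 * q2) ^ N"
    unfolding N_def J(2)[symmetric]
  proof (rule pair_prod[OF fin])
    fix r s assume rs: "r \<in> J" "s \<in> J" "r \<noteq> s"
    then have rs': "r \<in> {1..a}" "s \<in> {1..a}" using J by auto
    show "A r s * (B r s / C r s) * P r s * (A s r * (B s r / C s r) * P s r) = inverse (q1 * q2)"
      unfolding A_def B_def C_def P_def
      by (rule pairA) (use q genw[OF gw rs' rs(3)] genw[OF gw rs'(2,1) rs(3)[symmetric]] in auto)
  qed
  have H2: "(\<Prod>r\<in>J. \<Prod>s\<in>J - {r}. A r s * (B r s / C r s) * P r s) = PA * (PB / PC) * PP"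
    unfolding PA_def PB_def PC_def PP_def by (simp add: prod.distrib prod_dividef)
  have c0: "c0 ^ k * (inverse q1 - 1) ^ k = 1"
  proof -
    have "1 - inverse q1 \<noteq> 0" using q by (simp add: field_simps)
    then have "c0 * (inverse q1 - 1) = 1" unfolding c0_def by (simp add: field_simps)
    then show ?thesis by (metis power_mult_distrib power_one)
  qed
  have q3: "q3 powi (- int N) * inverse (q1 * q2) ^ N = 1"
    using q by (simp add: power_int_minus)
  have QQ: "(\<Prod>r\<in>J. \<Prod>s\<in>{1..a} - J. (w r - inverse q2 * w s) / (w r - w s)) = Q"
    unfolding Q_def A_def by (simp add: mult.commute)
  have "c0 ^ k * Z * (PA * Q) * (q3 powi (- int N) * (inverse q1 - 1)^k * PB * g (map w L) / PC) * 1 * PP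
      = (c0 ^ k * (inverse q1 - 1) ^ k) * (q3 powi (- int N) * (PA * (PB / PC) * PP)) * (Q * Z * g (map w L))"
    by (simp add: divide_inverse mult_ac)
  also have "\<dots> = Q * Z * g (map w L)"
    using c0 q3 H H2 by simp
  finally show ?thesis
    unfolding Yp E Ph zeta_prod_mJ QQ Z_def L_def .
qed


lemma termB:
  fixes q1 q2 q3 s1 s2 :: complex and w :: "nat \<Rightarrow> complex"
  assumes q: "q1 \<noteq> 0" "q2 \<noteq> 0" "q1 \<noteq> 1" "s1^2 = q1" "s2^2 = q2" "q3 = inverse (q1*q2)"
    and gw: "generic_w q1 q2 a w" and J: "J \<subseteq> {1..a}" "card J = k"
  shows "(\<Prod>r\<in>{1..a}. \<Prod>p\<in>{1..mJ J r}. Yp q1 q2 a w r (xlt q1 w r p))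
       * F_tilde q1 q2 k g (pts (xlt q1 w) a (mJ J))
       * (\<Prod>r\<in>{1..a}. \<Prod>p1\<in>{1..mJ J r}. \<Prod>p2\<in>{1..mJ J r}.
            if p1 < p2 then inverse (zeta q1 q2 q3 (xlt q1 w r p2 / xlt q1 w r p1)) else 1)
       * (\<Prod>r1\<in>{1..a}. \<Prod>r2\<in>{1..a} - {r1}. \<Prod>p1\<in>{1..mJ J r1}. \<Prod>p2\<in>{1..mJ J r2}.
            inverse (phi s1 s2 (xlt q1 w r2 p2 / xlt q1 w r1 p1)))
     = (\<Prod>r\<in>J. \<Prod>s\<in>{1..a} - J. (w r - q2 * w s) / (w r - w s))
       * g (map (\<lambda>r. q1 * w r) (sorted_list_of_set J))"
proof -
  have fin: "finite J" using J finite_subset by blast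
  have x1: "xlt q1 w r 1 = q1 * w r" "xlt q1 w r (Suc 0) = q1 * w r" for r by (simp_all add: xlt_def mult.commute)
  define A where "A r s = (q1 * w r * inverse q1 - w s * q2) / (q1 * w r * inverse q1 - w s)" for r s
  define B where "B r s = q1 * w r - inverse q1 * (q1 * w s)" for r s
  define C where "C r s = q1 * w r - q1 * w s" for r s
  define P where "P r s = inverse (phi s1 s2 (q1 * w s / (q1 * w r)))" for r s
  define c0 where "c0 = 1 / (1 - q1)"
  define N where "N = k * (k - 1) div 2"
  define L where "L = sorted_list_of_set J"
  define Z where "Z = (\<Prod>r\<in>J. Zf zs (w r))"
  define Q where "Q = (\<Prod>r\<in>J. \<Prod>s\<in>{1..a} - J. A r s)"
  define PA where "PA = (\<Prod>r\<in>J. \<Prod>s\<in>J - {r}. A r s)"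
  define PB where "PB = (\<Prod>r\<in>J. \<Prod>s\<in>J - {r}. B r s)"
  define PC where "PC = (\<Prod>r\<in>J. \<Prod>s\<in>J - {r}. C r s)"
  define PP where "PP = (\<Prod>r\<in>J. \<Prod>s\<in>J - {r}. P r s)"
  have Y1: "Yp q1 q2 a w r (q1 * w r) = c0 * ((\<Prod>s\<in>J - {r}. A r s) * (\<Prod>s\<in>{1..a} - J. A r s))"
    if "r \<in> J" for r
  proof -
    have "{1..a} - {r} = (J - {r}) \<union> ({1..a} - J)" using J that by auto
    then have "(\<Prod>s\<in>{1..a} - {r}. A r s) = (\<Prod>s\<in>(J - {r}) \<union> ({1..a} - J). A r s)" by simp
    also have "\<dots> = (\<Prod>s\<in>J - {r}. A r s) * (\<Prod>s\<in>{1..a} - J. A r s)"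
      by (rule prod.union_disjoint) (use fin in auto)
    finally have "(\<Prod>s\<in>{1..a} - {r}. A r s) = (\<Prod>s\<in>J - {r}. A r s) * (\<Prod>s\<in>{1..a} - J. A r s)" .
    then show ?thesis unfolding Yp_def c0_def A_def by simp
  qed
  have Yp: "(\<Prod>r\<in>{1..a}. \<Prod>p\<in>{1..mJ J r}. Yp q1 q2 a w r (xlt q1 w r p)) = (\<Prod>r\<in>J. Yp q1 q2 a w r (q1 * w r))"
    using prod_mJ[OF finite_atLeastAtMost J(1), of "\<lambda>r p. Yp q1 q2 a w r (xlt q1 w r p)"] by (simp add: x1)
  also have "\<dots> = (\<Prod>r\<in>J. c0 * ((\<Prod>s\<in>J - {r}. A r s) * (\<Prod>s\<in>{1..a} - J. A r s)))"
    by (rule prod.cong) (simp_all add: Y1)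
  also have "\<dots> = c0 ^ k * (PA * Q)"
    unfolding PA_def Q_def using J by (simp add: prod.distrib)
  finally have Yp: "(\<Prod>r\<in>{1..a}. \<Prod>p\<in>{1..mJ J r}. Yp q1 q2 a w r (xlt q1 w r p)) = c0 ^ k * (PA * Q)" .
  have Ph: "(\<Prod>r1\<in>{1..a}. \<Prod>r2\<in>{1..a} - {r1}. \<Prod>p1\<in>{1..mJ J r1}. \<Prod>p2\<in>{1..mJ J r2}.
            inverse (phi s1 s2 (xlt q1 w r2 p2 / xlt q1 w r1 p1))) = PP"
    using phi_prod_mJ[OF J(1), of "\<lambda>r1 r2 p1 p2. inverse (phi s1 s2 (xlt q1 w r2 p2 / xlt q1 w r1 p1))"]
    by (simp add: x1 P_def PP_def)
  have pts: "pts (xlt q1 w) a (mJ J) = map (\<lambda>r. q1 * w r) L" using pts_mJ[OF J(1), of "xlt q1 w"] by (simp add: x1 L_def)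
  have E: "F_tilde q1 q2 k g (pts (xlt q1 w) a (mJ J)) = (q2 / q1) powi (- int N) * (1 - q1)^k * PB * g (map (\<lambda>r. q1 * w r) L) / PC"
    unfolding pts F_tilde_def N_def PB_def PC_def B_def C_def L_def
    using reindex_pairs[OF fin, of "\<lambda>u v. u - inverse q1 * v" "\<lambda>r. q1 * w r"] reindex_pairs[OF fin, of "\<lambda>u v. u - v" "\<lambda>r. q1 * w r"] J(2)
    by simp
  have H: "(\<Prod>r\<in>J. \<Prod>s\<in>J - {r}. A r s * (B r s / C r s) * P r s) = (q2 / q1) ^ N"
    unfolding N_def J(2)[symmetric]
  proof (rule pair_prod[OF fin])
    fix r s assume rs: "r \<in> J" "s \<in> J" "r \<noteq> s"
    then have rs': "r \<in> {1..a}" "s \<in> {1..a}" using J by auto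
    show "A r s * (B r s / C r s) * P r s * (A s r * (B s r / C s r) * P s r) = q2 / q1"
      unfolding A_def B_def C_def P_def
      by (rule pairB) (use q genw[OF gw rs' rs(3)] genw[OF gw rs'(2,1) rs(3)[symmetric]] in auto)
  qed
  have H2: "(\<Prod>r\<in>J. \<Prod>s\<in>J - {r}. A r s * (B r s / C r s) * P r s) = PA * (PB / PC) * PP"
    unfolding PA_def PB_def PC_def PP_def by (simp add: prod.distrib prod_dividef)
  have c0: "c0 ^ k * (1 - q1) ^ k = 1"
  proof -
    have "1 - q1 \<noteq> 0" using q by (simp add: field_simps)
    then have "c0 * (1 - q1) = 1" unfolding c0_def by (simp add: field_simps)
    then show ?thesis by (metis power_mult_distrib power_one)
  qed
  have q3: "(q2 / q1) powi (- int N) * (q2 / q1) ^ N = 1"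
    using q by (simp add: power_int_minus)
  have QQ: "(\<Prod>r\<in>J. \<Prod>s\<in>{1..a} - J. (w r - q2 * w s) / (w r - w s)) = Q"
  proof -
    have e: "q1 * w r * inverse q1 = w r" for r using q by simp
    show ?thesis unfolding Q_def A_def e by (simp add: mult.commute)
  qed
  have "c0 ^ k * (PA * Q) * ((q2 / q1) powi (- int N) * (1 - q1)^k * PB * g (map (\<lambda>r. q1 * w r) L) / PC) * 1 * PP
      = (c0 ^ k * (1 - q1) ^ k) * ((q2 / q1) powi (- int N) * (PA * (PB / PC) * PP)) * (Q * g (map (\<lambda>r. q1 * w r) L))"
    by (simp add: divide_inverse mult_ac)
  also have "\<dots> = Q * g (map (\<lambda>r. q1 * w r) L)"
    using c0 q3 H H2 by simp
  finally show ?thesis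
    unfolding Yp E Ph zeta_prod_mJ QQ L_def .
qed



lemma E_vanish:
  assumes q: "q1 \<noteq> 0" "q1 \<noteq> 1" and gw: "generic_w q1 q2 a w"
    and m: "m \<in> compositions a k" "m r \<ge> 2"
  shows "E_tilde q1 q3 k g (pts (xgt q1 w) a m) = 0"
proof -
  have r: "r \<in> {1..a}" using m by (auto simp: compositions_def)
  have wr: "w r \<noteq> 0" using gw r unfolding generic_w_def by blast
  have len: "length (pts (xgt q1 w) a m) = k" using m by (simp add: length_pts compositions_def)
  have "(\<Prod>i<length (pts (xgt q1 w) a m). \<Prod>j\<in>{..<length (pts (xgt q1 w) a m)} - {i}.
          pts (xgt q1 w) a m ! i - inverse q1 * pts (xgt q1 w) a m ! j) = 0"
  proof (rule num_zero)
    show "xgt q1 w r 2 \<in> set (pts (xgt q1 w) a m)" by (rule mem_pts) (use r m in auto)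
    show "xgt q1 w r 1 \<in> set (pts (xgt q1 w) a m)" by (rule mem_pts) (use r m in auto)
    show "xgt q1 w r 2 = inverse q1 * xgt q1 w r 1" by (simp add: xgt_def power_int_minus)
    show "xgt q1 w r 2 \<noteq> xgt q1 w r 1" using q wr by (simp add: xgt_def power_int_minus field_simps)
  qed
  then show ?thesis unfolding E_tilde_def len by simp
qed

lemma F_vanish:
  assumes q: "q1 \<noteq> 0" "q1 \<noteq> 1" and gw: "generic_w q1 q2 a w"
    and m: "m \<in> compositions a k" "m r \<ge> 2"
  shows "F_tilde q1 q2 k g (pts (xlt q1 w) a m) = 0"
proof -
  have r: "r \<in> {1..a}" using m by (auto simp: compositions_def)
  have wr: "w r \<noteq> 0" using gw r unfolding generic_w_def by blast
  have len: "length (pts (xlt q1 w) a m) = k" using m by (simp add: length_pts compositions_def)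
  have "(\<Prod>i<length (pts (xlt q1 w) a m). \<Prod>j\<in>{..<length (pts (xlt q1 w) a m)} - {i}.
          pts (xlt q1 w) a m ! i - inverse q1 * pts (xlt q1 w) a m ! j) = 0"
  proof (rule num_zero)
    show "xlt q1 w r 1 \<in> set (pts (xlt q1 w) a m)" by (rule mem_pts) (use r m in auto)
    show "xlt q1 w r 2 \<in> set (pts (xlt q1 w) a m)" by (rule mem_pts) (use r m in auto)
    show "xlt q1 w r 1 = inverse q1 * xlt q1 w r 2" using q by (simp add: xlt_def power2_eq_square)
    show "xlt q1 w r 1 \<noteq> xlt q1 w r 2" using q wr by (simp add: xlt_def power2_eq_square)
  qed
  then show ?thesis unfolding F_tilde_def len by simp
qed

theorem lemma3p7:
  fixes q1 q2 q3 s1 s2 :: complex and a k :: nat and zs :: "complex list"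
    and g :: "complex list \<Rightarrow> complex"
  assumes "not_root_of_unity q1" "not_root_of_unity q2" "not_root_of_unity q3"
    and "q1 * q2 * q3 = 1"
    and "s1 ^ 2 = q1" "s2 ^ 2 = q2"
    and "a \<ge> 1" and "\<forall>z\<in>set zs. z \<noteq> 0"
    and "k \<ge> 1" and "laurent_poly k g" and "symmetric_fun k g"
  shows "(\<forall>n w. generic_w q1 q2 a w \<longrightarrow>
            Phi_gt q1 q2 q3 s1 s2 zs a k (E_tilde q1 q3 k g) n w = RHS_a q2 zs a k g n w)
       \<and> (\<forall>n w. generic_w q1 q2 a w \<longrightarrow>
            Phi_lt q1 q2 q3 s1 s2 a k (F_tilde q1 q2 k g) n w = RHS_b q1 q2 a k g n w)"
proof -
  have q1: "q1 \<noteq> 0" "q1 \<noteq> 1" using assms(1) unfolding not_root_of_unity_def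
    by (metis power_one_right zero_less_one)+
  have q2: "q2 \<noteq> 0" using assms(2) unfolding not_root_of_unity_def by blast
  have q3: "q3 = inverse (q1 * q2)" using assms(4) q1 q2 by (simp add: field_simps)
  show ?thesis
  proof (intro conjI allI impI)
    fix n w assume gw: "generic_w q1 q2 a w"
    let ?T = "\<lambda>m. if n = (\<lambda>r. - int (m r)) then
       (\<Prod>r\<in>{1..a}. \<Prod>p\<in>{1..m r}. Yf q1 q2 zs a w r (xgt q1 w r p))
       * E_tilde q1 q3 k g (pts (xgt q1 w) a m)
       * (\<Prod>r\<in>{1..a}. \<Prod>p1\<in>{1..m r}. \<Prod>p2\<in>{1..m r}.
            if p1 < p2 then inverse (zeta q1 q2 q3 (xgt q1 w r p1 / xgt q1 w r p2)) else 1)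
       * (\<Prod>r1\<in>{1..a}. \<Prod>r2\<in>{1..a} - {r1}. \<Prod>p1\<in>{1..m r1}. \<Prod>p2\<in>{1..m r2}.
            inverse (phi s1 s2 (xgt q1 w r1 p1 / xgt q1 w r2 p2)))
     else 0"
    have "Phi_gt q1 q2 q3 s1 s2 zs a k (E_tilde q1 q3 k g) n w = (\<Sum>m\<in>compositions a k. ?T m)"
      unfolding Phi_gt_def by simp
    also have "\<dots> = (\<Sum>J\<in>{J. J \<subseteq> {1..a} \<and> card J = k}. ?T (mJ J))"
      by (rule sum_comp_reduce) (simp add: E_vanish[OF q1 gw])
    also have "\<dots> = RHS_a q2 zs a k g n w"
      unfolding RHS_a_def
    proof (rule sum.cong)
      fix J assume "J \<in> {J. J \<subseteq> {1..a} \<and> card J = k}"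
      then have J: "J \<subseteq> {1..a}" "card J = k" by auto
      have c: "(\<lambda>r. - int (mJ J r)) = (\<lambda>r. if r \<in> J then -1 else 0)" by (auto simp: mJ_def)
      show "?T (mJ J) = (if n = (\<lambda>r. if r \<in> J then -1 else 0) then
       (\<Prod>r\<in>J. \<Prod>s\<in>{1..a} - J. (w r - inverse q2 * w s) / (w r - w s))
       * (\<Prod>r\<in>J. Zf zs (w r)) * g (map w (sorted_list_of_set J))
     else 0)"
        unfolding c using termA[OF q1(1) q2 q1(2) assms(5,6) q3 gw J] by simp
    qed simp
    finally show "Phi_gt q1 q2 q3 s1 s2 zs a k (E_tilde q1 q3 k g) n w = RHS_a q2 zs a k g n w" .
  next
    fix n w assume gw: "generic_w q1 q2 a w"
    let ?T = "\<lambda>m. if n = (\<lambda>r. int (m r)) then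
       (\<Prod>r\<in>{1..a}. \<Prod>p\<in>{1..m r}. Yp q1 q2 a w r (xlt q1 w r p))
       * F_tilde q1 q2 k g (pts (xlt q1 w) a m)
       * (\<Prod>r\<in>{1..a}. \<Prod>p1\<in>{1..m r}. \<Prod>p2\<in>{1..m r}.
            if p1 < p2 then inverse (zeta q1 q2 q3 (xlt q1 w r p2 / xlt q1 w r p1)) else 1)
       * (\<Prod>r1\<in>{1..a}. \<Prod>r2\<in>{1..a} - {r1}. \<Prod>p1\<in>{1..m r1}. \<Prod>p2\<in>{1..m r2}.
            inverse (phi s1 s2 (xlt q1 w r2 p2 / xlt q1 w r1 p1)))
     else 0"
    have "Phi_lt q1 q2 q3 s1 s2 a k (F_tilde q1 q2 k g) n w = (\<Sum>m\<in>compositions a k. ?T m)"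
      unfolding Phi_lt_def by simp
    also have "\<dots> = (\<Sum>J\<in>{J. J \<subseteq> {1..a} \<and> card J = k}. ?T (mJ J))"
      by (rule sum_comp_reduce) (simp add: F_vanish[OF q1 gw])
    also have "\<dots> = RHS_b q1 q2 a k g n w"
      unfolding RHS_b_def
    proof (rule sum.cong)
      fix J assume "J \<in> {J. J \<subseteq> {1..a} \<and> card J = k}"
      then have J: "J \<subseteq> {1..a}" "card J = k" by auto
      have c: "(\<lambda>r. int (mJ J r)) = (\<lambda>r. if r \<in> J then 1 else 0)" by (auto simp: mJ_def)
      show "?T (mJ J) = (if n = (\<lambda>r. if r \<in> J then 1 else 0) then
       (\<Prod>r\<in>J. \<Prod>s\<in>{1..a} - J. (w r - q2 * w s) / (w r - w s))
       * g (map (\<lambda>r. q1 * w r) (sorted_list_of_set J))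
     else 0)"
        unfolding c using termB[OF q1(1) q2 q1(2) assms(5,6) q3 gw J] by simp
    qed simp
    finally show "Phi_lt q1 q2 q3 s1 s2 a k (F_tilde q1 q2 k g) n w = RHS_b q1 q2 a k g n w" .
  qed
qed


end
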